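(* For every base $b\ge 2$ there exist infinitely many $b$-wMRH numbers, and infinitely many distinct integers $A\ge 0$ that occur as multiplicative extra terms of some $b$-wMRH number.
   Context: Fix a base $b\ge 2$. $s_b(N)$ is the sum of the base-$b$ digits of $N$. For a positive integer $X$, its reversal $X^R$ is the integer whose base-$b$ representation is that of $X$ written in reverse order (leading zeros of the result are dropped). A positive integer $N$ is a $b$-wMRH number if there exists an integer $A\ge 0$, called a multiplicative extra term of $N$, such that $N=(A+s_b(N))\cdot(A+s_b(N))^R$. *)

theory Defs
  imports Main
begin

fun digits :: "nat \<Rightarrow> nat \<Rightarrow> nat list" where
  "digits b n = (if b < 2 \<or> n = 0 then [] else n mod b # digits b (n div b))"

declare digits.simps [simp del]

definition from_digits :: "nat \<Rightarrow> nat list \<Rightarrow> nat" where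
  "from_digits b ds = foldr (\<lambda>d acc. d + b * acc) ds 0"

definition digit_sum :: "nat \<Rightarrow> nat \<Rightarrow> nat" where
  "digit_sum b n = sum_list (digits b n)"

(* reversal: write the base-b representation backwards; leading zeros vanish *)
definition reversal :: "nat \<Rightarrow> nat \<Rightarrow> nat" where
  "reversal b n = from_digits b (rev (digits b n))"

definition mult_extra_term :: "nat \<Rightarrow> nat \<Rightarrow> nat \<Rightarrow> bool" where
  "mult_extra_term b N A \<longleftrightarrow>
     N = (A + digit_sum b N) * reversal b (A + digit_sum b N)"

definition wMRH :: "nat \<Rightarrow> nat \<Rightarrow> bool" where
  "wMRH b N \<longleftrightarrow> N > 0 \<and> (\<exists>A. mult_extra_term b N A)"

end

theory Submission
  imports Defs
begin

lemma digits_pow: "b \<ge> 2 \<Longrightarrow> digits b (b^k) = replicate k 0 @ [1]"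
proof (induction k)
  case 0 then show ?case by (subst digits.simps) (simp add: digits.simps)
next
  case (Suc k)
  have "b^Suc k \<noteq> 0" using Suc.prems by simp
  then have "digits b (b^Suc k) = 0 # digits b (b^k)"
    using Suc.prems by (subst digits.simps) simp
  then show ?case using Suc by simp
qed

lemma from_digits_zeros: "from_digits b (replicate k 0) = 0"
  by (induction k) (auto simp: from_digits_def)

lemma ds_pow: "b \<ge> 2 \<Longrightarrow> digit_sum b (b^k) = 1"
  by (simp add: digit_sum_def digits_pow)

lemma rev_pow: "b \<ge> 2 \<Longrightarrow> reversal b (b^k) = 1"
proof -
  assume b: "b \<ge> 2"
  have "from_digits b (1 # replicate k 0) = 1"
    using from_digits_zeros[of b k] by (simp add: from_digits_def)
  then show ?thesis by (simp add: reversal_def digits_pow b)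
qed

lemma key: "b \<ge> 2 \<Longrightarrow> wMRH b (b^k) \<and> mult_extra_term b (b^k) (b^k - 1)"
proof -
  assume b: "b \<ge> 2"
  have pos: "b^k > 0" using b by simp
  have m: "mult_extra_term b (b^k) (b^k - 1)"
    unfolding mult_extra_term_def using ds_pow[OF b] rev_pow[OF b] pos by simp
  then show ?thesis unfolding wMRH_def using pos by blast
qed

theorem proposition17:
  fixes b :: nat
  assumes "b \<ge> 2"
  shows "infinite {N. wMRH b N} \<and>
         infinite {A. \<exists>N. wMRH b N \<and> mult_extra_term b N A}"
proof
  have inj1: "inj (\<lambda>k::nat. b^k)" using assms by (auto simp: inj_on_def power_inject_exp)
  have inj2: "inj (\<lambda>k::nat. b^k - 1)"
  proof (rule injI)
    fix x y assume "b^x - 1 = b^(y::nat) - 1"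
    moreover have "b^x > 0" "b^y > 0" using assms by auto
    ultimately have "b^x = b^y" by linarith
    then show "x = y" using assms by (simp add: power_inject_exp)
  qed
  have "range (\<lambda>k::nat. b^k) \<subseteq> {N. wMRH b N}" using key[OF assms] by auto
  moreover have "infinite (range (\<lambda>k::nat. b^k))" using inj1 finite_imageD[of "\<lambda>k::nat. b^k" UNIV] by auto
  ultimately show "infinite {N. wMRH b N}" using infinite_super by blast
  have "range (\<lambda>k::nat. b^k - 1) \<subseteq> {A. \<exists>N. wMRH b N \<and> mult_extra_term b N A}"
    using key[OF assms] by blast
  moreover have "infinite (range (\<lambda>k::nat. b^k - 1))" using inj2 finite_imageD[of "\<lambda>k::nat. b^k - 1" UNIV] by auto
  ultimately show "infinite {A. \<exists>N. wMRH b N \<and> mult_extra_term b N A}" using infinite_super by blast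
qed

end
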